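(* Let $(E,X,Y)$, with $X=(X_1,\dots,X_d)$, be generated by a structural causal model whose graph $\mathcal{G}$ is a DAG, whose distribution is faithful (and Markov) with respect to $\mathcal{G}$, and in which $E$ is exogenous (i.e. $E$ has no parents). If $E\notin\mathrm{PA}_Y$, then $$S_{\mathrm{ICP}}=\mathrm{PA}_Y\cap\big(\mathrm{CH}_E\cup\mathrm{PA}(\mathrm{AN}_Y\cap\mathrm{CH}_E)\big).$$
   Context: In the DAG $\mathcal{G}$, $\mathrm{PA}_v$, $\mathrm{CH}_v$, $\mathrm{AN}_v$ denote the parents, children and ancestors of a node $v$ (not containing $v$), and for a set $A$ of nodes $\mathrm{PA}(A)=\bigcup_{v\in A}\mathrm{PA}_v$. Nodes $j\in[d]=\{1,\dots,d\}$ are identified with the variables $X_j$. A set $S\subseteq[d]$ is invariant if $Y\perp\!\!\!\perp E\mid X_S$, where $X_S=(X_j)_{j\in S}$; $\mathcal{I}$ is the collection of invariant sets, and $S_{\mathrm{ICP}}=\bigcap_{S\in\mathcal{I}}S$ (with $S_{\mathrm{ICP}}=\emptyset$ if $\mathcal{I}=\emptyset$). *)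

theory Defs
  imports Main
begin

text \<open>Directed graphs are edge relations; (u,v) in G means u -> v.\<close>

definition parents :: "('v \<times> 'v) set \<Rightarrow> 'v \<Rightarrow> 'v set" where
  "parents G v = {u. (u, v) \<in> G}"

definition children :: "('v \<times> 'v) set \<Rightarrow> 'v \<Rightarrow> 'v set" where
  "children G v = {w. (v, w) \<in> G}"

definition ancestors :: "('v \<times> 'v) set \<Rightarrow> 'v \<Rightarrow> 'v set" where
  "ancestors G v = {u. (u, v) \<in> G\<^sup>+}"

definition descendants :: "('v \<times> 'v) set \<Rightarrow> 'v \<Rightarrow> 'v set" where
  "descendants G v = {w. (v, w) \<in> G\<^sup>+}"

definition parents_set :: "('v \<times> 'v) set \<Rightarrow> 'v set \<Rightarrow> 'v set" where
  "parents_set G A = (\<Union>v\<in>A. parents G v)"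

definition adjacent :: "('v \<times> 'v) set \<Rightarrow> 'v \<Rightarrow> 'v \<Rightarrow> bool" where
  "adjacent G u v \<longleftrightarrow> (u, v) \<in> G \<or> (v, u) \<in> G"

definition is_path :: "('v \<times> 'v) set \<Rightarrow> 'v list \<Rightarrow> bool" where
  "is_path G p \<longleftrightarrow> p \<noteq> [] \<and> distinct p \<and>
     (\<forall>i. Suc i < length p \<longrightarrow> adjacent G (p ! i) (p ! Suc i))"

definition collider :: "('v \<times> 'v) set \<Rightarrow> 'v list \<Rightarrow> nat \<Rightarrow> bool" where
  "collider G p i \<longleftrightarrow> (p ! (i - 1), p ! i) \<in> G \<and> (p ! Suc i, p ! i) \<in> G"

definition d_connecting :: "('v \<times> 'v) set \<Rightarrow> 'v set \<Rightarrow> 'v list \<Rightarrow> bool" where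
  "d_connecting G Z p \<longleftrightarrow> is_path G p \<and>
     (\<forall>i. 0 < i \<and> Suc i < length p \<longrightarrow>
        (if collider G p i
         then (p ! i \<in> Z \<or> descendants G (p ! i) \<inter> Z \<noteq> {})
         else p ! i \<notin> Z))"

definition d_separated :: "('v \<times> 'v) set \<Rightarrow> 'v set \<Rightarrow> 'v set \<Rightarrow> 'v set \<Rightarrow> bool" where
  "d_separated G A B Z \<longleftrightarrow>
     \<not> (\<exists>p. d_connecting G Z p \<and> hd p \<in> A \<and> last p \<in> B)"

text \<open>The conditional independence relation of the distribution of (E,X,Y)
  is modelled abstractly: ci A B Z means X_A independent of X_B given X_Z.\<close>
definition markov_faithful ::
  "('v \<times> 'v) set \<Rightarrow> 'v set \<Rightarrow> ('v set \<Rightarrow> 'v set \<Rightarrow> 'v set \<Rightarrow> bool) \<Rightarrow> bool" where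
  "markov_faithful G V ci \<longleftrightarrow>
     (\<forall>A B Z. A \<subseteq> V \<and> B \<subseteq> V \<and> Z \<subseteq> V \<and> A \<inter> B = {} \<and> A \<inter> Z = {} \<and> B \<inter> Z = {}
        \<longrightarrow> (ci A B Z \<longleftrightarrow> d_separated G A B Z))"

text \<open>Invariant sets S \<subseteq> [d] (identified with the predictor nodes Xs): Y indep E given X_S.\<close>
definition invariant_sets ::
  "('v set \<Rightarrow> 'v set \<Rightarrow> 'v set \<Rightarrow> bool) \<Rightarrow> 'v \<Rightarrow> 'v \<Rightarrow> 'v set \<Rightarrow> 'v set set" where
  "invariant_sets ci E Y Xs = {S. S \<subseteq> Xs \<and> ci {Y} {E} S}"

definition S_ICP ::
  "('v set \<Rightarrow> 'v set \<Rightarrow> 'v set \<Rightarrow> bool) \<Rightarrow> 'v \<Rightarrow> 'v \<Rightarrow> 'v set \<Rightarrow> 'v set" where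
  "S_ICP ci E Y Xs = (if invariant_sets ci E Y Xs = {} then {} else \<Inter> (invariant_sets ci E Y Xs))"

end

theory Submission
  imports Defs
begin

lemma acyc_contra:
  assumes "acyclic G" "(a,b) \<in> G\<^sup>+" "(b,a) \<in> G\<^sup>*"
  shows False
  using assms trancl_rtrancl_trancl[of a b G a] by (auto simp: acyclic_def)

lemma acyc_edge2:
  assumes "acyclic G" "(a,b) \<in> G" "(b,a) \<in> G" shows False
  using acyc_contra[of G a b] assms by auto

lemma acyc_edge1:
  assumes "acyclic G" "(a,a) \<in> G" shows False
  using acyc_contra[of G a a] assms by auto

lemma d_connecting_rev:
  assumes "d_connecting G Z p"
  shows "d_connecting G Z (rev p)"
proof -
  let ?n = "length p"
  have P: "is_path G p" and C: "\<And>i. 0 < i \<Longrightarrow> Suc i < ?n \<Longrightarrow>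
        (if collider G p i then (p ! i \<in> Z \<or> descendants G (p ! i) \<inter> Z \<noteq> {}) else p ! i \<notin> Z)"
    using assms unfolding d_connecting_def by auto
  have "is_path G (rev p)"
    unfolding is_path_def
  proof (intro conjI allI impI)
    show "rev p \<noteq> []" using P by (simp add: is_path_def)
    show "distinct (rev p)" using P by (simp add: is_path_def)
    fix i assume i: "Suc i < length (rev p)"
    have a: "adjacent G (p ! (?n - Suc (Suc i))) (p ! Suc (?n - Suc (Suc i)))"
      using P i unfolding is_path_def by auto
    have e1: "Suc (?n - Suc (Suc i)) = ?n - Suc i" using i by simp
    have "rev p ! i = p ! (?n - Suc i)" "rev p ! Suc i = p ! (?n - Suc (Suc i))"
      using i by (auto simp: rev_nth)
    then show "adjacent G (rev p ! i) (rev p ! Suc i)"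
      using a unfolding e1 adjacent_def by auto
  qed
  moreover have "\<forall>i. 0 < i \<and> Suc i < length (rev p) \<longrightarrow>
        (if collider G (rev p) i then (rev p ! i \<in> Z \<or> descendants G (rev p ! i) \<inter> Z \<noteq> {}) else rev p ! i \<notin> Z)"
  proof (intro allI impI)
    fix i assume i: "0 < i \<and> Suc i < length (rev p)"
    define j where "j = ?n - Suc i"
    have j: "0 < j" "Suc j < ?n" using i by (auto simp: j_def)
    have x1: "?n - Suc (i - 1) = Suc j" using i unfolding j_def by auto
    have x2: "?n - Suc (Suc i) = j - 1" using i by (simp add: j_def)
    have r0: "rev p ! i = p ! j" using i by (simp add: rev_nth j_def)
    have r1: "rev p ! (i - 1) = p ! Suc j" using i x1 by (simp add: rev_nth)
    have r2: "rev p ! Suc i = p ! (j - 1)" using i x2 by (simp add: rev_nth)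
    have "collider G (rev p) i = collider G p j" unfolding collider_def r0 r1 r2 by auto
    then show "if collider G (rev p) i then (rev p ! i \<in> Z \<or> descendants G (rev p ! i) \<inter> Z \<noteq> {}) else rev p ! i \<notin> Z"
      using C[OF j] r0 by simp
  qed
  ultimately show ?thesis unfolding d_connecting_def by blast
qed

lemma chain:
  assumes d: "d_connecting G Z p" and n: "Suc 0 < length p"
    and e: "(p!0, p!1) \<in> G" and z: "\<And>z. z \<in> Z \<Longrightarrow> (p!1, z) \<notin> G\<^sup>*"
  shows "(p!1, last p) \<in> G\<^sup>*"
proof -
  have P: "\<And>i. Suc i < length p \<Longrightarrow> adjacent G (p!i) (p!Suc i)"
    using d by (auto simp: d_connecting_def is_path_def)
  have C: "\<And>i. 0 < i \<Longrightarrow> Suc i < length p \<Longrightarrow>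
        (if collider G p i then (p ! i \<in> Z \<or> descendants G (p ! i) \<inter> Z \<noteq> {}) else p ! i \<notin> Z)"
    using d unfolding d_connecting_def by auto
  have Q: "\<forall>i. 1 \<le> i \<and> i < length p \<longrightarrow> (p!1, p!i) \<in> G\<^sup>* \<and> (p!(i-1), p!i) \<in> G" (is "\<forall>i. ?Q i")
  proof
    fix i show "?Q i"
    proof (induction i)
      case 0 show ?case by simp
    next
      case (Suc i)
      show ?case
      proof (cases "i = 0")
        case True then show ?thesis using e by simp
      next
        case False
        show ?thesis
        proof
          assume h: "1 \<le> Suc i \<and> Suc i < length p"
          then have IH: "(p!1, p!i) \<in> G\<^sup>*" "(p!(i-1), p!i) \<in> G" using Suc.IH False by auto
          have nc: "\<not> collider G p i"
          proof
            assume col: "collider G p i"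
            then have "p!i \<in> Z \<or> descendants G (p!i) \<inter> Z \<noteq> {}" using C[of i] False h by auto
            then show False
            proof
              assume "p!i \<in> Z" then show False using z IH(1) by blast
            next
              assume "descendants G (p!i) \<inter> Z \<noteq> {}"
              then obtain w where "w \<in> Z" "(p!i, w) \<in> G\<^sup>+" by (auto simp: descendants_def)
              then show False using z IH(1) by (meson rtrancl_trans trancl_into_rtrancl)
            qed
          qed
          have "(p ! Suc i, p ! i) \<notin> G" using nc IH(2) by (auto simp: collider_def)
          then have "(p!i, p!Suc i) \<in> G" using P[of i] h by (auto simp: adjacent_def)
          then show "(p!1, p!Suc i) \<in> G\<^sup>* \<and> (p!(Suc i - 1), p!Suc i) \<in> G" using IH(1) by simp
        qed
      qed
    qed
  qed
  have "last p = p ! (length p - 1)" using n by (intro last_conv_nth) auto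
  moreover have "1 \<le> length p - 1 \<and> length p - 1 < length p" using n by arith
  then have "(p!1, p!(length p - 1)) \<in> G\<^sup>*" using Q by blast
  ultimately show ?thesis by simp
qed

lemma dir_path_exists:
  assumes "(k, y) \<in> G\<^sup>+"
  shows "\<exists>q. q \<noteq> [] \<and> hd q = k \<and> last q = y \<and> (\<forall>i. Suc i < length q \<longrightarrow> (q!i, q!Suc i) \<in> G)"
  using assms
proof (induction rule: converse_trancl_induct)
  case (base k)
  show ?case
  proof (intro exI[of _ "[k,y]"] conjI allI impI)
    fix i assume "Suc i < length [k,y]"
    then have "i = 0" by simp
    then show "([k,y]!i, [k,y]!Suc i) \<in> G" using base by simp
  qed auto
next
  case (step k k')
  then obtain q where q: "q \<noteq> []" "hd q = k'" "last q = y" "\<forall>i. Suc i < length q \<longrightarrow> (q!i, q!Suc i) \<in> G"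
    by blast
  show ?case
  proof (intro exI[of _ "k # q"] conjI allI impI)
    fix i assume i: "Suc i < length (k#q)"
    show "((k#q)!i, (k#q)!Suc i) \<in> G"
    proof (cases i)
      case 0 then show ?thesis using step(1) q by (simp add: hd_conv_nth)
    next
      case (Suc m) then show ?thesis using q(4) i by simp
    qed
  qed (use q in auto)
qed

lemma dir_trancl:
  assumes "\<forall>i. Suc i < length q \<longrightarrow> (q!i, q!Suc i) \<in> G"
  shows "i < j \<Longrightarrow> j < length q \<Longrightarrow> (q!i, q!j) \<in> G\<^sup>+"
proof (induction j)
  case 0 then show ?case by simp
next
  case (Suc j)
  have ed: "(q!j, q!Suc j) \<in> G" using assms Suc.prems by auto
  show ?case
  proof (cases "i = j")
    case True then show ?thesis using ed by auto
  next
    case False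
    then have "(q!i, q!j) \<in> G\<^sup>+" using Suc by auto
    then show ?thesis using ed by auto
  qed
qed

lemma dir_dconn:
  assumes ac: "acyclic G" and ne: "p \<noteq> []"
    and ed: "\<forall>i. Suc i < length p \<longrightarrow> (p!i, p!Suc i) \<in> G"
    and nz: "\<forall>i. 0 < i \<and> Suc i < length p \<longrightarrow> p!i \<notin> Z"
  shows "d_connecting G Z p"
proof -
  have "distinct p"
    unfolding distinct_conv_nth
  proof (intro allI impI)
    fix i j assume "i < length p" "j < length p" "i \<noteq> j"
    then consider "i < j" | "j < i" by linarith
    then show "p!i \<noteq> p!j"
    proof cases
      case 1 then show ?thesis using dir_trancl[OF ed 1] \<open>j < length p\<close> ac by (auto simp: acyclic_def)
    next
      case 2 then show ?thesis using dir_trancl[OF ed 2] \<open>i < length p\<close> ac by (auto simp: acyclic_def)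
    qed
  qed
  then have "is_path G p" using ne ed by (auto simp: is_path_def adjacent_def)
  moreover have "\<not> collider G p i" if "Suc i < length p" for i
    using ed that acyc_edge2[OF ac] by (auto simp: collider_def)
  ultimately show ?thesis using nz unfolding d_connecting_def by auto
qed


theorem proposition4:
  fixes G :: "('v \<times> 'v) set" and E Y :: 'v and Xs :: "'v set"
    and ci :: "'v set \<Rightarrow> 'v set \<Rightarrow> 'v set \<Rightarrow> bool"
  assumes "finite Xs" and "E \<noteq> Y" and "E \<notin> Xs" and "Y \<notin> Xs"
    and "G \<subseteq> (insert E (insert Y Xs)) \<times> (insert E (insert Y Xs))"
    and "acyclic G"
    and "markov_faithful G (insert E (insert Y Xs)) ci"
    and "parents G E = {}"
    and "E \<notin> parents G Y"
  shows "S_ICP ci E Y Xs =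
           parents G Y \<inter> (children G E \<union> parents_set G (ancestors G Y \<inter> children G E))"
proof -
  note EY = assms(2) and EX = assms(3) and YX = assms(4) and GV = assms(5) and ac = assms(6)
    and mf = assms(7)
  have noparE: "\<And>x. (x, E) \<notin> G" using assms(8) by (auto simp: parents_def)
  have EnY: "(E, Y) \<notin> G" using assms(9) by (auto simp: parents_def)
  have nstE: "\<And>x. (x, E) \<notin> G\<^sup>+" using noparE by (metis tranclE)
  let ?V = "insert E (insert Y Xs)"
  have inv_iff: "S \<in> invariant_sets ci E Y Xs \<longleftrightarrow> d_separated G {Y} {E} S" if S: "S \<subseteq> Xs" for S
  proof -
    have "ci {Y} {E} S \<longleftrightarrow> d_separated G {Y} {E} S"
      using mf S EY EX YX unfolding markov_faithful_def by (elim allE[of _ "{Y}"] allE[of _ "{E}"] allE[of _ S]) auto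
    then show ?thesis using S by (auto simp: invariant_sets_def)
  qed
  have sep_E: "d_separated G {Y} {E} S" if "\<And>p. d_connecting G S p \<Longrightarrow> hd p = E \<Longrightarrow> last p = Y \<Longrightarrow> False" for S
    unfolding d_separated_def
  proof
    assume "\<exists>p. d_connecting G S p \<and> hd p \<in> {Y} \<and> last p \<in> {E}"
    then obtain p where p: "d_connecting G S p" "hd p = Y" "last p = E" by auto
    have ne: "p \<noteq> []" using p(1) by (auto simp: d_connecting_def is_path_def)
    show False using that[OF d_connecting_rev[OF p(1)]] p ne by (simp add: hd_rev last_rev)
  qed
  have sepY: "d_separated G {Y} {E} S \<Longrightarrow> d_connecting G S p \<Longrightarrow> hd p = E \<Longrightarrow> last p = Y \<Longrightarrow> False" for S p
  proof -
    assume a: "d_separated G {Y} {E} S" "d_connecting G S p" "hd p = E" "last p = Y"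
    have ne: "p \<noteq> []" using a(2) by (auto simp: d_connecting_def is_path_def)
    have "hd (rev p) = Y" "last (rev p) = E" using a ne by (auto simp: hd_rev last_rev)
    then show False using a(1) d_connecting_rev[OF a(2)] unfolding d_separated_def by blast
  qed
  have PAX: "parents G Y \<subseteq> Xs"
  proof
    fix x assume x: "x \<in> parents G Y"
    then have "(x, Y) \<in> G" by (simp add: parents_def)
    moreover have "x \<noteq> Y" using acyc_edge1[OF ac] calculation by auto
    moreover have "x \<noteq> E" using assms(9) x by auto
    ultimately show "x \<in> Xs" using GV by auto
  qed
  have invPA: "parents G Y \<in> invariant_sets ci E Y Xs"
    unfolding inv_iff[OF PAX]
  proof (rule sep_E)
    fix r assume r: "d_connecting G (parents G Y) r" "hd r = E" "last r = Y"
    let ?p = "rev r"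
    have d: "d_connecting G (parents G Y) ?p" using d_connecting_rev[OF r(1)] .
    have ne: "r \<noteq> []" using r(1) by (auto simp: d_connecting_def is_path_def)
    have P: "is_path G ?p" using d by (simp add: d_connecting_def)
    have h0: "?p ! 0 = Y" using r ne by (simp add: hd_conv_nth[symmetric] hd_rev)
    have hl: "last ?p = E" using r ne by (simp add: last_rev)
    have Lp: "last ?p = ?p ! (length ?p - 1)" by (rule last_conv_nth) (use ne in simp)
    have n2: "length ?p \<ge> 2"
    proof (rule ccontr)
      assume "\<not> 2 \<le> length ?p"
      then have "length ?p = 1" using ne by (cases "length ?p") auto
      then have "last ?p = ?p ! 0" using Lp by simp
      then show False using h0 hl EY by simp
    qed
    have adj: "adjacent G Y (?p ! 1)" using P n2 h0 unfolding is_path_def by force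
    have n3: "length ?p \<ge> 3"
    proof (rule ccontr)
      assume "\<not> 3 \<le> length ?p"
      then have "length ?p = 2" using n2 by simp
      then have "last ?p = ?p ! 1" using Lp by simp
      then show False using adj hl noparE EnY by (auto simp: adjacent_def)
    qed
    have C1: "if collider G ?p 1 then (?p ! 1 \<in> parents G Y \<or> descendants G (?p ! 1) \<inter> parents G Y \<noteq> {}) else ?p ! 1 \<notin> parents G Y"
      using d n3 unfolding d_connecting_def by auto
    have dist: "distinct ?p" using P by (simp add: is_path_def)
    have p1E: "?p ! 1 \<noteq> E"
    proof
      assume "?p ! 1 = E"
      moreover note Lp
      ultimately have "?p ! 1 = ?p ! (length ?p - 1)" using hl by simp
      then show False using dist n3 by (simp add: nth_eq_iff_index_eq)
    qed
    consider "(?p ! 1, Y) \<in> G" | "(Y, ?p ! 1) \<in> G" using adj by (auto simp: adjacent_def)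
    then show False
    proof cases
      case 1
      have "\<not> collider G ?p 1" using 1 h0 acyc_edge2[OF ac] by (auto simp: collider_def)
      then show False using C1 1 by (simp add: parents_def)
    next
      case 2
      have "(?p ! 1, last ?p) \<in> G\<^sup>*"
      proof (rule chain[OF d])
        show "Suc 0 < length ?p" using n3 by simp
        show "(?p ! 0, ?p ! 1) \<in> G" using 2 h0 by simp
        fix z assume z1: "z \<in> parents G Y"
        show "(?p ! 1, z) \<notin> G\<^sup>*"
        proof
          assume z2: "(?p ! 1, z) \<in> G\<^sup>*"
          then have "(Y, z) \<in> G\<^sup>+" using 2 by auto
          moreover have "(z, Y) \<in> G\<^sup>*" using z1 by (auto simp: parents_def)
          ultimately show False using acyc_contra[OF ac] by blast
        qed
      qed
      then have "(?p ! 1, E) \<in> G\<^sup>+" using hl p1E by (auto simp: rtrancl_eq_or_trancl)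
      then show False using nstE by blast
    qed
  qed
  define A where "A = ancestors G Y \<inter> children G E"
  define S0 where "S0 = A \<union> (parents_set G A - {E})"
  have S0an: "\<And>z. z \<in> S0 \<Longrightarrow> (z, Y) \<in> G\<^sup>+"
    unfolding S0_def A_def parents_set_def parents_def ancestors_def by auto
  have S0X: "S0 \<subseteq> Xs"
  proof
    fix z assume z: "z \<in> S0"
    have "z \<noteq> Y" using S0an[OF z] ac by (auto simp: acyclic_def)
    moreover have "z \<noteq> E" using z noparE unfolding S0_def A_def children_def by auto
    moreover have "z \<in> ?V" using z GV unfolding S0_def A_def children_def parents_set_def parents_def by auto
    ultimately show "z \<in> Xs" by auto
  qed
  have invS0: "S0 \<in> invariant_sets ci E Y Xs"
    unfolding inv_iff[OF S0X]
  proof (rule sep_E)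
    fix p assume r: "d_connecting G S0 p" "hd p = E" "last p = Y"
    have ne: "p \<noteq> []" using r(1) by (auto simp: d_connecting_def is_path_def)
    have P: "is_path G p" using r(1) by (simp add: d_connecting_def)
    have h0: "p ! 0 = E" using r ne by (simp add: hd_conv_nth[symmetric])
    have hl: "p ! (length p - 1) = Y" using r ne by (simp add: last_conv_nth)
    have dist: "distinct p" using P by (simp add: is_path_def)
    have n2: "length p \<ge> 2"
    proof (rule ccontr)
      assume "\<not> 2 \<le> length p"
      then have "length p = 1" using ne by (cases "length p") auto
      then show False using h0 hl EY by simp
    qed
    have adj: "adjacent G E (p ! 1)" using P n2 h0 unfolding is_path_def by force
    then have e1: "(E, p ! 1) \<in> G" using noparE by (auto simp: adjacent_def)
    have n3: "length p \<ge> 3"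
    proof (rule ccontr)
      assume "\<not> 3 \<le> length p"
      then have "length p = 2" using n2 by simp
      then show False using e1 hl EnY by simp
    qed
    have p1Y: "p ! 1 \<noteq> Y"
    proof
      assume "p ! 1 = Y"
      then have "p ! 1 = p ! (length p - 1)" using hl by simp
      then show False using dist n3 by (simp add: nth_eq_iff_index_eq)
    qed
    have C: "\<And>i. 0 < i \<Longrightarrow> Suc i < length p \<Longrightarrow>
        (if collider G p i then (p ! i \<in> S0 \<or> descendants G (p ! i) \<inter> S0 \<noteq> {}) else p ! i \<notin> S0)"
      using r(1) unfolding d_connecting_def by auto
    show False
    proof (cases "(p ! 1, Y) \<in> G\<^sup>+")
      case True
      then have inA: "p ! 1 \<in> A" using e1 unfolding A_def ancestors_def children_def by auto
      then have inS: "p ! 1 \<in> S0" unfolding S0_def by auto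
      have col: "collider G p 1" using C[of 1] n3 inS by (auto split: if_splits)
      then have e21: "(p ! 2, p ! 1) \<in> G" by (simp add: collider_def numeral_2_eq_2)
      have p2E: "p ! 2 \<noteq> E"
      proof
        assume "p ! 2 = E"
        then have "p ! 2 = p ! 0" using h0 by simp
        moreover have "2 < length p" "0 < length p" using n3 by auto
        ultimately show False using nth_eq_iff_index_eq[OF dist, of 2 0] by auto
      qed
      have inS2: "p ! 2 \<in> S0" using e21 inA p2E unfolding S0_def parents_set_def parents_def by auto
      have p2Y: "p ! 2 \<noteq> Y"
      proof
        assume "p ! 2 = Y"
        then show False using e21 True acyc_contra[OF ac] by blast
      qed
      have n4: "length p \<ge> 4"
      proof (rule ccontr)
        assume "\<not> 4 \<le> length p"
        then have "length p = 3" using n3 by simp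
        then show False using hl p2Y by (simp add: numeral_3_eq_3 numeral_2_eq_2)
      qed
      have "\<not> collider G p 2" using e21 acyc_edge2[OF ac] by (auto simp: collider_def)
      then show False using C[of 2] n4 inS2 by auto
    next
      case False
      have "(p ! 1, last p) \<in> G\<^sup>*"
      proof (rule chain[OF r(1)])
        show "Suc 0 < length p" using n3 by simp
        show "(p ! 0, p ! 1) \<in> G" using e1 h0 by simp
        fix z assume z1: "z \<in> S0"
        show "(p ! 1, z) \<notin> G\<^sup>*"
        proof
          assume z2: "(p ! 1, z) \<in> G\<^sup>*"
          then have "(p ! 1, Y) \<in> G\<^sup>+" using S0an[OF z1] by auto
          then show False using False by blast
        qed
      qed
      then show False using False p1Y r(3) by (auto simp: rtrancl_eq_or_trancl)
    qed
  qed
  let ?R = "parents G Y \<inter> (children G E \<union> parents_set G (ancestors G Y \<inter> children G E))"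
  have lower: "?R \<subseteq> S" if S: "S \<in> invariant_sets ci E Y Xs" for S
  proof
    fix x assume x: "x \<in> ?R"
    have SX: "S \<subseteq> Xs" using S by (simp add: invariant_sets_def)
    have ds: "d_separated G {Y} {E} S" using S inv_iff[OF SX] by simp
    show "x \<in> S"
    proof (rule ccontr)
      assume xS: "x \<notin> S"
      have xY: "(x, Y) \<in> G" using x by (simp add: parents_def)
      have xE: "x \<noteq> E" using x assms(9) by auto
      have "x \<in> children G E \<or> (\<exists>k. (x, k) \<in> G \<and> (E, k) \<in> G \<and> (k, Y) \<in> G\<^sup>+)"
        using x unfolding children_def parents_set_def parents_def ancestors_def by auto
      then show False
      proof
        assume "x \<in> children G E"
        then have Ex: "(E, x) \<in> G" by (simp add: children_def)
        have "d_connecting G S [E, x, Y]"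
        proof (rule dir_dconn[OF ac])
          show "\<forall>i. Suc i < length [E, x, Y] \<longrightarrow> ([E, x, Y] ! i, [E, x, Y] ! Suc i) \<in> G"
            using Ex xY by (auto simp: less_Suc_eq nth_Cons split: nat.split)
          show "\<forall>i. 0 < i \<and> Suc i < length [E, x, Y] \<longrightarrow> [E, x, Y] ! i \<notin> S"
            using xS by (auto simp: less_Suc_eq)
        qed simp
        then show False using sepY[OF ds, of "[E, x, Y]"] by simp
      next
        assume "\<exists>k. (x, k) \<in> G \<and> (E, k) \<in> G \<and> (k, Y) \<in> G\<^sup>+"
        then obtain k where k: "(x, k) \<in> G" "(E, k) \<in> G" "(k, Y) \<in> G\<^sup>+" by blast
        show False
        proof (cases "k \<in> S \<or> descendants G k \<inter> S \<noteq> {}")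
          case True
          have kE: "k \<noteq> E" using k(2) noparE by auto
          have kx: "k \<noteq> x" using k(1) acyc_edge1[OF ac] by auto
          have kY: "k \<noteq> Y" using k(3) ac by (auto simp: acyclic_def)
          have xY': "x \<noteq> Y" using xY acyc_edge1[OF ac] by auto
          have YxG: "(Y, x) \<notin> G" using xY acyc_edge2[OF ac] by auto
          have "d_connecting G S [E, k, x, Y]"
            unfolding d_connecting_def is_path_def
          proof (intro conjI allI impI)
            show "distinct [E, k, x, Y]" using kE kx kY xY' xE EY by auto
            fix i assume "Suc i < length [E, k, x, Y]"
            then have "i = 0 \<or> i = 1 \<or> i = 2" by auto
            then show "adjacent G ([E, k, x, Y] ! i) ([E, k, x, Y] ! Suc i)"
              using k xY by (auto simp: adjacent_def numeral_2_eq_2)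
          next
            fix i assume i: "0 < i \<and> Suc i < length [E, k, x, Y]"
            then have "i = 1 \<or> i = 2" by auto
            then show "if collider G [E, k, x, Y] i
                then [E, k, x, Y] ! i \<in> S \<or> descendants G ([E, k, x, Y] ! i) \<inter> S \<noteq> {}
                else [E, k, x, Y] ! i \<notin> S"
              using True k YxG xS by (auto simp: collider_def numeral_2_eq_2)
          qed simp
          then show False using sepY[OF ds, of "[E, k, x, Y]"] by simp
        next
          case False
          obtain q where q: "q \<noteq> []" "hd q = k" "last q = Y" "\<forall>i. Suc i < length q \<longrightarrow> (q!i, q!Suc i) \<in> G"
            using dir_path_exists[OF k(3)] by blast
          have q0: "q ! 0 = k" using q by (simp add: hd_conv_nth)
          have qdesc: "(k, q ! i) \<in> G\<^sup>*" if "i < length q" for i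
          proof (cases i)
            case 0 then show ?thesis using q0 by simp
          next
            case (Suc m) then show ?thesis using dir_trancl[OF q(4), of 0 i] that q0 by auto
          qed
          have "d_connecting G S (E # q)"
          proof (rule dir_dconn[OF ac])
            show "\<forall>i. Suc i < length (E # q) \<longrightarrow> ((E # q) ! i, (E # q) ! Suc i) \<in> G"
            proof (intro allI impI)
              fix i assume i: "Suc i < length (E # q)"
              show "((E # q) ! i, (E # q) ! Suc i) \<in> G"
                using i q(4) q0 k(2) by (cases i) auto
            qed
            show "\<forall>i. 0 < i \<and> Suc i < length (E # q) \<longrightarrow> (E # q) ! i \<notin> S"
            proof (intro allI impI)
              fix i assume i: "0 < i \<and> Suc i < length (E # q)"
              then obtain m where m: "i = Suc m" "m < length q" by (cases i) auto
              have "(k, q ! m) \<in> G\<^sup>*" using qdesc[OF m(2)] .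
              then have "q ! m = k \<or> (k, q ! m) \<in> G\<^sup>+" by (auto simp: rtrancl_eq_or_trancl)
              then show "(E # q) ! i \<notin> S" using False m by (auto simp: descendants_def)
            qed
          qed simp
          moreover have "last (E # q) = Y" using q by simp
          ultimately show False using sepY[OF ds, of "E # q"] by simp
        qed
      qed
    qed
  qed
  have ne: "invariant_sets ci E Y Xs \<noteq> {}" using invPA by auto
  have "S_ICP ci E Y Xs = \<Inter> (invariant_sets ci E Y Xs)" using ne by (simp add: S_ICP_def)
  moreover have "\<Inter> (invariant_sets ci E Y Xs) \<subseteq> ?R"
  proof -
    have "\<Inter> (invariant_sets ci E Y Xs) \<subseteq> parents G Y \<inter> S0" using invPA invS0 by auto
    also have "\<dots> \<subseteq> ?R" unfolding S0_def A_def by auto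
    finally show ?thesis .
  qed
  moreover have "?R \<subseteq> \<Inter> (invariant_sets ci E Y Xs)" using lower by auto
  ultimately show ?thesis by auto
qed

end
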